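(* Let $s\ge2$ and let $\mathcal{C}$ be an $[n,k,d]_q$ linear code with multiple $(r_i,\delta_i)_{i\in[s]}$ localities with respect to a partition $\mathcal{T}_1,\dots,\mathcal{T}_s$ of $[n]$, $n_i=|\mathcal{T}_i|$, $r_1\le\dots\le r_s$, $\delta_1\ge\dots\ge\delta_s\ge2$. Let $\Delta_0=0$ and $\Delta_j=\sum_{i=1}^{j}\lceil n_i/(r_i+\delta_i-1)\rceil(\delta_i-1)$ for $j=1,\dots,s-1$. Suppose $\sum_{i=1}^{s-1}r_i\lceil n_i/(r_i+\delta_i-1)\rceil\le k-1$ and, for each $j=1,\dots,s-1$, $$r_j\left\lceil\frac{\Delta_j-\Delta_{j-1}-1}{\delta_j-1}\right\rceil+(\Delta_j-\Delta_{j-1}-1)<n_j.$$ Then $$d\le n-k+1-\sum_{i=1}^{s-1}\left\lceil\frac{n_i}{r_i+\delta_i-1}\right\rceil(\delta_i-1)-\left(\left\lceil\frac{k-\sum_{i=1}^{s-1}r_i\lceil n_i/(r_i+\delta_i-1)\rceil}{r_s}\right\rceil-1\right)(\delta_s-1).$$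
   Context: $[n]=\{1,\dots,n\}$. For an $[n,k,d]_q$ linear code with generator matrix columns $\vec g_1,\dots,\vec g_n$, a regenerating set of coordinate $i$ is a (minimal) subset $R\subseteq[n]$ with $i\in R$ such that $\vec g_i$ is an $\mathbb{F}_q$-linear combination of $\{\vec g_j\}_{j\in R\setminus\{i\}}$ and no proper subset of $R\setminus\{i\}$ suffices; $\mathcal{R}_i$ is the set of regenerating sets of coordinate $i$. Multiple $(r_i,\delta_i)_{i\in[s]}$ localities: $\mathcal{T}_1,\dots,\mathcal{T}_s$ is a partition of $[n]$, $r_1\le\dots\le r_s$ and $\delta_1\ge\dots\ge\delta_s\ge2$ are integers, and for each $i\in[s]$ and each $\iota\in\mathcal{T}_i$ there is $S_\iota\subseteq\mathcal{T}_i$ with $\iota\in S_\iota$, $\delta_i\le|S_\iota|\le r_i+\delta_i-1$, such that for every $E\subseteq S_\iota$ with $|E|=\delta_i-1$ and every $j\in E$, $(S_\iota\setminus E)\cup\{j\}\in\mathcal{R}_j$. *)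

theory Defs
  imports Complex_Main
begin

text \<open>An [n,k]_q linear code is given by a k x n generator matrix over a finite field 'a.
  Column i (for i in {1..n}) is the vector g i, whose entries are g i t for t < k.
  The codewords are the vectors (m * G)_i = sum_{t<k} m t * g i t, i in {1..n}.\<close>

definition gen_full_rank :: "nat \<Rightarrow> nat \<Rightarrow> (nat \<Rightarrow> nat \<Rightarrow> 'a::field) \<Rightarrow> bool" where
  "gen_full_rank n k g \<longleftrightarrow>
     (\<forall>m::nat \<Rightarrow> 'a. (\<forall>i\<in>{1..n}. (\<Sum>t<k. m t * g i t) = 0) \<longrightarrow> (\<forall>t<k. m t = 0))"

definition min_dist :: "nat \<Rightarrow> nat \<Rightarrow> (nat \<Rightarrow> nat \<Rightarrow> 'a::field) \<Rightarrow> nat" where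
  "min_dist n k g = Min {card {i\<in>{1..n}. (\<Sum>t<k. m t * g i t) \<noteq> 0} | m.
                         \<exists>i\<in>{1..n}. (\<Sum>t<k. m t * g i t) \<noteq> 0}"

definition in_col_span :: "nat \<Rightarrow> (nat \<Rightarrow> nat \<Rightarrow> 'a::field) \<Rightarrow> nat set \<Rightarrow> nat \<Rightarrow> bool" where
  "in_col_span k g S i \<longleftrightarrow> (\<exists>c. \<forall>t<k. g i t = (\<Sum>j\<in>S. c j * g j t))"

definition regenerating :: "nat \<Rightarrow> nat \<Rightarrow> (nat \<Rightarrow> nat \<Rightarrow> 'a::field) \<Rightarrow> nat \<Rightarrow> nat set \<Rightarrow> bool" where
  "regenerating n k g i R \<longleftrightarrow>
     R \<subseteq> {1..n} \<and> i \<in> R \<and> in_col_span k g (R - {i}) i \<and>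
     (\<forall>R'. R' \<subset> R - {i} \<longrightarrow> \<not> in_col_span k g R' i)"

definition is_partition :: "nat \<Rightarrow> nat \<Rightarrow> (nat \<Rightarrow> nat set) \<Rightarrow> bool" where
  "is_partition n s T \<longleftrightarrow>
     (\<Union>i\<in>{1..s}. T i) = {1..n} \<and> (\<forall>i\<in>{1..s}. T i \<noteq> {}) \<and>
     (\<forall>i\<in>{1..s}. \<forall>j\<in>{1..s}. i \<noteq> j \<longrightarrow> T i \<inter> T j = {})"

definition multiple_localities ::
  "nat \<Rightarrow> nat \<Rightarrow> (nat \<Rightarrow> nat \<Rightarrow> 'a::field) \<Rightarrow> nat \<Rightarrow> (nat \<Rightarrow> nat set) \<Rightarrow> (nat \<Rightarrow> nat) \<Rightarrow> (nat \<Rightarrow> nat) \<Rightarrow> bool" where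
  "multiple_localities n k g s T r \<delta> \<longleftrightarrow>
     is_partition n s T \<and>
     (\<forall>i j. 1 \<le> i \<longrightarrow> i \<le> j \<longrightarrow> j \<le> s \<longrightarrow> r i \<le> r j \<and> \<delta> j \<le> \<delta> i) \<and>
     \<delta> s \<ge> 2 \<and>
     (\<forall>i\<in>{1..s}. \<forall>\<iota>\<in>T i. \<exists>S. S \<subseteq> T i \<and> \<iota> \<in> S \<and> \<delta> i \<le> card S \<and> card S \<le> r i + \<delta> i - 1 \<and>
        (\<forall>E. E \<subseteq> S \<longrightarrow> card E = \<delta> i - 1 \<longrightarrow>
           (\<forall>j\<in>E. regenerating n k g j ((S - E) \<union> {j}))))"

definition Delta :: "(nat \<Rightarrow> nat set) \<Rightarrow> (nat \<Rightarrow> nat) \<Rightarrow> (nat \<Rightarrow> nat) \<Rightarrow> nat \<Rightarrow> int" where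
  "Delta T r \<delta> j = (\<Sum>i=1..j. \<lceil>real (card (T i)) / real (r i + \<delta> i - 1)\<rceil> * (int (\<delta> i) - 1))"

end

theory Submission
  imports Defs
begin



lemma span_base:
  assumes "j \<in> B" "finite B"
  shows "in_col_span k g B j"
  unfolding in_col_span_def
proof (intro exI allI impI)
  fix t
  show "g j t = (\<Sum>b\<in>B. (\<lambda>b. if b = j then 1 else 0) b * g b t)"
  proof -
    have "(\<Sum>b\<in>B. (if b = j then 1 else 0) * g b t) = (\<Sum>b\<in>B. if b = j then g b t else 0)"
      by (rule sum.cong) auto
    then show ?thesis using assms by simp
  qed
qed

lemma span_mono:
  assumes "in_col_span k g B j" "B \<subseteq> B'" "finite B'"
  shows "in_col_span k g B' j"
proof -
  obtain c where c: "\<forall>t<k. g j t = (\<Sum>b\<in>B. c b * g b t)" using assms(1) unfolding in_col_span_def by blast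
  have "\<forall>t<k. g j t = (\<Sum>b\<in>B'. (if b \<in> B then c b else 0) * g b t)"
  proof (intro allI impI)
    fix t assume "t < k"
    have "(\<Sum>b\<in>B'. (if b \<in> B then c b else 0) * g b t) = (\<Sum>b\<in>B. c b * g b t)"
      by (rule sum.mono_neutral_cong_right[OF assms(3) assms(2)]) auto
    then show "g j t = (\<Sum>b\<in>B'. (if b \<in> B then c b else 0) * g b t)" using c \<open>t<k\<close> by simp
  qed
  then show ?thesis unfolding in_col_span_def by (rule exI[of _ "\<lambda>b. if b \<in> B then c b else 0"])
qed

lemma span_trans:
  assumes "finite B" "finite S" "in_col_span k g S i" "\<forall>j\<in>S. in_col_span k g B j"
  shows "in_col_span k g B i"
proof -
  obtain c where c: "\<forall>t<k. g i t = (\<Sum>j\<in>S. c j * g j t)" using assms(3) unfolding in_col_span_def by blast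
  have "\<forall>j\<in>S. \<exists>d. \<forall>t<k. g j t = (\<Sum>b\<in>B. d b * g b t)" using assms(4) unfolding in_col_span_def by blast
  then obtain D where D: "\<forall>j\<in>S. \<forall>t<k. g j t = (\<Sum>b\<in>B. D j b * g b t)" by (rule bchoice[elim_format]) blast
  have "\<forall>t<k. g i t = (\<Sum>b\<in>B. (\<Sum>j\<in>S. c j * D j b) * g b t)"
  proof (intro allI impI)
    fix t assume t: "t < k"
    have "g i t = (\<Sum>j\<in>S. c j * g j t)" using c t by blast
    also have "\<dots> = (\<Sum>j\<in>S. c j * (\<Sum>b\<in>B. D j b * g b t))"
      by (rule sum.cong[OF refl]) (use D t in metis)
    also have "\<dots> = (\<Sum>j\<in>S. \<Sum>b\<in>B. c j * D j b * g b t)" by (simp add: sum_distrib_left mult.assoc)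
    also have "\<dots> = (\<Sum>b\<in>B. \<Sum>j\<in>S. c j * D j b * g b t)" by (rule sum.swap)
    also have "\<dots> = (\<Sum>b\<in>B. (\<Sum>j\<in>S. c j * D j b) * g b t)" by (simp add: sum_distrib_right)
    finally show "g i t = (\<Sum>b\<in>B. (\<Sum>j\<in>S. c j * D j b) * g b t)" .
  qed
  then show ?thesis unfolding in_col_span_def by (rule exI[of _ "\<lambda>b. \<Sum>j\<in>S. c j * D j b"])
qed

lemma span_orth:
  assumes "\<forall>b\<in>B. (\<Sum>t<k. m t * g b t) = 0" "in_col_span k g B j"
  shows "(\<Sum>t<k. m t * g j t) = 0"
proof -
  obtain c where c: "\<forall>t<k. g j t = (\<Sum>b\<in>B. c b * g b t)" using assms(2) unfolding in_col_span_def by blast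
  have "(\<Sum>t<k. m t * g j t) = (\<Sum>t<k. m t * (\<Sum>b\<in>B. c b * g b t))"
    by (rule sum.cong[OF refl]) (use c in auto)
  also have "\<dots> = (\<Sum>t<k. \<Sum>b\<in>B. c b * (m t * g b t))" by (simp add: sum_distrib_left mult.left_commute)
  also have "\<dots> = (\<Sum>b\<in>B. \<Sum>t<k. c b * (m t * g b t))" by (rule sum.swap)
  also have "\<dots> = (\<Sum>b\<in>B. c b * (\<Sum>t<k. m t * g b t))" by (simp add: sum_distrib_left)
  also have "\<dots> = 0" using assms(1) by simp
  finally show ?thesis .
qed


lemma homog:
  fixes e :: "'b \<Rightarrow> nat \<Rightarrow> 'a::field"
  assumes "finite B" "card B < k"
  shows "\<exists>m. (\<exists>t<k. m t \<noteq> 0) \<and> (\<forall>b\<in>B. (\<Sum>t<k. m t * e b t) = 0)"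
  using assms
proof (induction k arbitrary: B e)
  case 0 then show ?case by simp
next
  case (Suc k)
  show ?case
  proof (cases "\<forall>b\<in>B. e b k = 0")
    case True
    let ?m = "\<lambda>t. if t = k then (1::'a) else 0"
    have "\<forall>b\<in>B. (\<Sum>t<Suc k. ?m t * e b t) = 0" using True by simp
    moreover have "\<exists>t<Suc k. ?m t \<noteq> 0" by (rule exI[of _ k]) simp
    ultimately show ?thesis by (intro exI[of _ ?m]) blast
  next
    case False
    then obtain b0 where b0: "b0 \<in> B" "e b0 k \<noteq> 0" by blast
    define e' where "e' = (\<lambda>b t. e b t - (e b k / e b0 k) * e b0 t)"
    have "card (B - {b0}) < k" using Suc.prems b0 card_gt_0_iff[of B] by (auto simp: card_Diff_singleton)
    then obtain m' where m': "\<exists>t<k. m' t \<noteq> 0" "\<forall>b\<in>B - {b0}. (\<Sum>t<k. m' t * e' b t) = 0"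
      using Suc.IH[of "B - {b0}" e'] Suc.prems by auto
    define \<sigma> where "\<sigma> = (\<lambda>b. \<Sum>t<k. m' t * e b t)"
    define m where "m = (\<lambda>t. if t < k then m' t else - \<sigma> b0 / e b0 k)"
    have sm: "(\<Sum>t<Suc k. m t * e b t) = \<sigma> b + (- \<sigma> b0 / e b0 k) * e b k" for b
      by (simp add: m_def \<sigma>_def)
    have "\<forall>b\<in>B. (\<Sum>t<Suc k. m t * e b t) = 0"
    proof
      fix b assume b: "b \<in> B"
      show "(\<Sum>t<Suc k. m t * e b t) = 0"
      proof (cases "b = b0")
        case True then show ?thesis unfolding sm using b0 by simp
      next
        case False
        then have "(\<Sum>t<k. m' t * e' b t) = 0" using m' b by auto
        moreover have "(\<Sum>t<k. m' t * e' b t) = \<sigma> b - (e b k / e b0 k) * \<sigma> b0"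
          by (simp add: e'_def \<sigma>_def right_diff_distrib sum_subtractf sum_distrib_left mult.left_commute)
        ultimately have "\<sigma> b = (e b k / e b0 k) * \<sigma> b0" by simp
        then show ?thesis unfolding sm using b0 by (simp add: field_simps)
      qed
    qed
    moreover have "\<exists>t<Suc k. m t \<noteq> 0" using m' by (auto simp: m_def)
    ultimately show ?thesis by blast
  qed
qed



definition good :: "nat \<Rightarrow> nat \<Rightarrow> (nat \<Rightarrow> nat \<Rightarrow> 'a::field) \<Rightarrow> nat set \<Rightarrow> nat set \<Rightarrow> bool" where
  "good n k g X B \<longleftrightarrow> X \<subseteq> {1..n} \<and> B \<subseteq> X \<and> (\<forall>j\<in>X. in_col_span k g B j)"

lemma good_finite: "good n k g X B \<Longrightarrow> finite X \<and> finite B"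
  unfolding good_def by (meson finite_atLeastAtMost finite_subset)

lemma step_common:
  assumes good: "good n k g X B"
    and S: "S \<subseteq> {1..n}" and E: "E \<subseteq> S" "card E = d - 1"
    and loc: "\<forall>E. E \<subseteq> S \<longrightarrow> card E = d - 1 \<longrightarrow> (\<forall>j\<in>E. regenerating n k g j ((S - E) \<union> {j}))"
  shows "good n k g (X \<union> S) (B \<union> (S - X - E))"
proof -
  have fX: "finite X" and fB: "finite B" using good_finite[OF good] by auto
  have fS: "finite S" using S finite_subset by blast
  let ?B' = "B \<union> (S - X - E)"
  have fB': "finite ?B'" using fB fS by simp
  have BX: "B \<subseteq> X" "X \<subseteq> {1..n}" and sp: "\<forall>j\<in>X. in_col_span k g B j" using good unfolding good_def by auto
  have c1: "in_col_span k g ?B' j" if "j \<in> X \<or> j \<in> S - X - E" for j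
  proof (cases "j \<in> X")
    case True then show ?thesis using sp span_mono[of k g B j ?B'] fB' by auto
  next
    case False then show ?thesis using that span_base[of j ?B' k g] fB' by auto
  qed
  have c2: "in_col_span k g ?B' j" if j: "j \<in> E" for j
  proof -
    have "regenerating n k g j ((S - E) \<union> {j})" using loc E j by blast
    then have "in_col_span k g ((S - E) \<union> {j} - {j}) j" unfolding regenerating_def by blast
    moreover have "(S - E) \<union> {j} - {j} = S - E" using j by auto
    ultimately have "in_col_span k g (S - E) j" by simp
    moreover have "\<forall>i\<in>S - E. in_col_span k g ?B' i" using c1 by blast
    ultimately show ?thesis using span_trans[of ?B' "S - E" k g j] fB' fS by blast
  qed
  have "\<forall>j\<in>X \<union> S. in_col_span k g ?B' j"
  proof
    fix j assume "j \<in> X \<union> S"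
    then have "j \<in> X \<or> j \<in> S - X - E \<or> j \<in> E" by blast
    then show "in_col_span k g ?B' j" using c1 c2 by blast
  qed
  then show ?thesis unfolding good_def using BX S by blast
qed

lemma step:
  assumes good: "good n k g X B"
    and S: "S \<subseteq> {1..n}" "\<iota> \<in> S" "\<iota> \<notin> X" "d \<le> card S" "card S \<le> rr + d - 1" "2 \<le> d"
    and loc: "\<forall>E. E \<subseteq> S \<longrightarrow> card E = d - 1 \<longrightarrow> (\<forall>j\<in>E. regenerating n k g j ((S - E) \<union> {j}))"
  shows "\<exists>B'. good n k g (X \<union> S) B' \<and> card B \<le> card B' \<and> card B' \<le> card B + rr
     \<and> card X + card B' + 1 \<le> card (X \<union> S) + card B
     \<and> (card B < card B' \<longrightarrow> card X + card B' + (d - 1) \<le> card (X \<union> S) + card B)"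
proof -
  have fX: "finite X" and fB: "finite B" using good_finite[OF good] by auto
  have fS: "finite S" using S finite_subset by blast
  have BX: "B \<subseteq> X" using good unfolding good_def by auto
  define A where "A = S - X"
  have fA: "finite A" using fS A_def by simp
  have a1: "1 \<le> card A" using S fA unfolding A_def by (metis Diff_iff card_0_eq empty_iff less_one not_le)
  have cXS: "card (X \<union> S) = card X + card A"
    unfolding A_def using fX fS by (metis Un_Diff_cancel card_Un_disjoint Diff_disjoint finite_Diff)
  have cSA: "card S = card A + card (S \<inter> X)"
    unfolding A_def using fS by (metis Diff_Diff_Int card_Diff_subset_Int card_mono inf_le1 le_add_diff_inverse2 finite_Int Int_commute inf.absorb_iff2 card_Diff_subset finite_subset)
  have cB: "card (B \<union> (A - E)) = card B + card (A - E)" for E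
  proof -
    have "B \<inter> (A - E) = {}" using BX unfolding A_def by blast
    then show ?thesis using fB fA by (simp add: card_Un_disjoint)
  qed
  show ?thesis
  proof (cases "d - 1 \<le> card A")
    case True
    then obtain E where E: "E \<subseteq> A" "card E = d - 1" using obtain_subset_with_card_n by metis
    have ES: "E \<subseteq> S" using E unfolding A_def by blast
    have g': "good n k g (X \<union> S) (B \<union> (A - E))" using step_common[OF good S(1) ES E(2) loc] unfolding A_def
      by (simp add: Diff_insert)
    have cAE: "card (A - E) = card A - (d - 1)" using E fA by (simp add: card_Diff_subset finite_subset)
    have "card A \<le> card S" using fS unfolding A_def by (simp add: card_mono)
    then show ?thesis using g' cAE cB[of E] cXS True S(5,6)
      by (intro exI[of _ "B \<union> (A - E)"]) auto
  next
    case False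
    have "card (S \<inter> X) \<ge> d - 1 - card A" using cSA S(4) False by linarith
    then obtain F where F: "F \<subseteq> S \<inter> X" "card F = d - 1 - card A" using obtain_subset_with_card_n by metis
    define E where "E = A \<union> F"
    have fF: "finite F" using F fS finite_subset by blast
    have "A \<inter> F = {}" using F unfolding A_def by blast
    then have cE: "card E = d - 1" unfolding E_def using fA fF F(2) False by (simp add: card_Un_disjoint)
    have ES: "E \<subseteq> S" using F unfolding E_def A_def by blast
    have g': "good n k g (X \<union> S) (B \<union> (A - E))" using step_common[OF good S(1) ES cE loc] unfolding A_def
      by (simp add: Diff_insert)
    have "B \<union> (A - E) = B" unfolding E_def by blast
    then show ?thesis using g' cXS a1
      by (intro exI[of _ "B \<union> (A - E)"]) auto
  qed
qed



lemma run:
  fixes P :: "'x set \<Rightarrow> 'x set \<Rightarrow> bool"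
  assumes dd: "1 \<le> dd"
    and start: "P X0 B0"
    and stepA: "\<And>X B. P X B \<Longrightarrow> card X0 + card B \<le> card X + card B0 \<Longrightarrow>
        card X + card B0 < card X0 + card B + D \<Longrightarrow>
        card B \<le> card B0 + r0 * ((card X + card B0 - (card X0 + card B)) div dd) \<Longrightarrow>
        \<exists>X' B'. P X' B' \<and> card B \<le> card B' \<and> card B' \<le> card B + r0
          \<and> card X + card B' + 1 \<le> card X' + card B
          \<and> (card B < card B' \<longrightarrow> card X + card B' + dd \<le> card X' + card B)"
  shows "\<exists>X' B'. P X' B' \<and> card X0 + card B' + D \<le> card X' + card B0
            \<and> card B' \<le> card B0 + r0 * ((D + dd - 1) div dd)"
proof (cases "D = 0")
  case True
  then show ?thesis using start by (intro exI[of _ X0] exI[of _ B0]) auto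
next
  case False
  have D1: "0 < D" using False by simp
  have Ddiv: "(D + dd - 1) div dd = (D - 1) div dd + 1"
  proof -
    have "D + dd - 1 = (D - 1) + dd" using False dd by linarith
    moreover have "((D - 1) + dd) div dd = (D - 1) div dd + 1" using dd div_add_self2[of dd "D - 1"] by linarith
    ultimately show ?thesis by simp
  qed
  have main: "\<And>X B. D - (card X + card B0 - (card X0 + card B)) = m \<Longrightarrow> P X B \<Longrightarrow>
        card X0 + card B \<le> card X + card B0 \<Longrightarrow>
        card X + card B0 < card X0 + card B + D \<Longrightarrow>
        card B \<le> card B0 + r0 * ((card X + card B0 - (card X0 + card B)) div dd) \<Longrightarrow>
        \<exists>X' B'. P X' B' \<and> card X0 + card B' + D \<le> card X' + card B0
            \<and> card B' \<le> card B0 + r0 * ((D + dd - 1) div dd)" for m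
  proof (induction m rule: less_induct)
    case (less m X B)
    define h where "h = card X + card B0 - (card X0 + card B)"
    obtain X' B' where st: "P X' B'" "card B \<le> card B'" "card B' \<le> card B + r0"
      "card X + card B' + 1 \<le> card X' + card B"
      "card B < card B' \<longrightarrow> card X + card B' + dd \<le> card X' + card B"
      using stepA[OF less.prems(2-5)] by blast
    define h' where "h' = card X' + card B0 - (card X0 + card B')"
    have hD: "h < D" using less.prems(3,4) unfolding h_def by linarith
    have hh': "h + 1 \<le> h'" using st(4) less.prems(3) unfolding h_def h'_def by linarith
    show ?case
    proof (cases "D \<le> h'")
      case True
      have "h div dd \<le> (D - 1) div dd" using hD by (intro div_le_mono) linarith
      then have m1: "r0 * (h div dd) \<le> r0 * ((D - 1) div dd)" by (rule mult_le_mono2)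
      have "card B' \<le> card B0 + r0 * ((D - 1) div dd) + r0"
        using m1 st(3) less.prems(5) unfolding h_def by linarith
      also have "\<dots> = card B0 + r0 * ((D + dd - 1) div dd)" unfolding Ddiv by (simp add: algebra_simps)
      finally have "card B' \<le> card B0 + r0 * ((D + dd - 1) div dd)" .
      moreover have "card X0 + card B' + D \<le> card X' + card B0" using True D1 unfolding h'_def by linarith
      ultimately show ?thesis using st(1) by blast
    next
      case False
      have inv: "card B' \<le> card B0 + r0 * (h' div dd)"
      proof (cases "card B < card B'")
        case True
        then have "h + dd \<le> h'" using st(5) less.prems(3) unfolding h_def h'_def by linarith
        then have "(h + dd) div dd \<le> h' div dd" by (rule div_le_mono)
        moreover have "(h + dd) div dd = h div dd + 1" using dd div_add_self2[of dd h] by linarith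
        ultimately have "r0 * (h div dd) + r0 \<le> r0 * (h' div dd)"
          by (metis add.commute mult.commute mult_le_mono2 mult_Suc_right plus_1_eq_Suc)
        then show ?thesis using st(3) less.prems(5) unfolding h_def by linarith
      next
        case False
        then have "card B' = card B" using st(2) by linarith
        moreover have "h div dd \<le> h' div dd" using hh' by (intro div_le_mono) linarith
        then have "r0 * (h div dd) \<le> r0 * (h' div dd)" by (rule mult_le_mono2)
        ultimately show ?thesis using less.prems(5) unfolding h_def by linarith
      qed
      have lt: "D - h' < m" using less.prems(1) hh' hD False unfolding h_def h'_def by linarith
      have p3: "card X0 + card B' \<le> card X' + card B0" using hh' unfolding h'_def by linarith
      have p4: "card X' + card B0 < card X0 + card B' + D" using False p3 unfolding h'_def by linarith
      show ?thesis
        using less.IH[OF lt _ st(1) p3 p4 inv[unfolded h'_def]] unfolding h'_def by blast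
    qed
  qed
  show ?thesis using main[OF refl start] False by simp
qed





lemma full_cover:
  assumes fr: "gen_full_rank n k g" and gd: "good n k g {1..n} B"
  shows "k \<le> card B"
proof (rule ccontr)
  assume "\<not> k \<le> card B"
  then have lt: "card B < k" by simp
  have fB: "finite B" using good_finite[OF gd] by simp
  obtain m where m: "\<exists>t<k. m t \<noteq> 0" "\<forall>b\<in>B. (\<Sum>t<k. m t * g b t) = 0"
    using homog[where e=g, OF fB lt] by blast
  have "\<forall>i\<in>{1..n}. (\<Sum>t<k. m t * g i t) = 0"
    using gd m(2) span_orth[where B=B and k=k and m=m and g=g] unfolding good_def by blast
  then have "\<forall>t<k. m t = 0" using fr unfolding gen_full_rank_def by blast
  then show False using m(1) by blast
qed

lemma dist_bound:
  assumes fr: "gen_full_rank n k g" and gd: "good n k g X B" and lt: "card B < k"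
  shows "min_dist n k g + card X \<le> n"
proof -
  have fB: "finite B" using good_finite[OF gd] by simp
  have XS: "X \<subseteq> {1..n}" using gd unfolding good_def by blast
  obtain m where m: "\<exists>t<k. m t \<noteq> 0" "\<forall>b\<in>B. (\<Sum>t<k. m t * g b t) = 0"
    using homog[where e=g, OF fB lt] by blast
  have orth: "\<forall>i\<in>X. (\<Sum>t<k. m t * g i t) = 0"
    using gd m(2) span_orth[where B=B and k=k and m=m and g=g] unfolding good_def by blast
  have ex: "\<exists>i\<in>{1..n}. (\<Sum>t<k. m t * g i t) \<noteq> 0"
    using fr m(1) unfolding gen_full_rank_def by blast
  define W where "W = {i\<in>{1..n}. (\<Sum>t<k. m t * g i t) \<noteq> 0}"
  have "W \<subseteq> {1..n} - X" using orth unfolding W_def by blast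
  then have "card W \<le> card ({1..n} - X)" by (intro card_mono) auto
  also have "\<dots> = n - card X" using XS by (simp add: card_Diff_subset finite_subset)
  finally have cW: "card W \<le> n - card X" .
  let ?M = "{card {i\<in>{1..n}. (\<Sum>t<k. m t * g i t) \<noteq> 0} | m. \<exists>i\<in>{1..n}. (\<Sum>t<k. m t * g i t) \<noteq> 0}"
  have inM: "card W \<in> ?M" unfolding W_def using ex by blast
  have "?M \<subseteq> {..n}"
  proof
    fix x assume "x \<in> ?M"
    then obtain m' where "x = card {i\<in>{1..n}. (\<Sum>t<k. m' t * g i t) \<noteq> 0}" by blast
    moreover have "card {i\<in>{1..n}. (\<Sum>t<k. m' t * g i t) \<noteq> 0} \<le> card {1..n}"
      by (intro card_mono) auto
    ultimately show "x \<in> {..n}" by simp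
  qed
  then have "finite ?M" using finite_subset by blast
  then have "min_dist n k g \<le> card W" unfolding min_dist_def using inM by (rule Min_le)
  then show ?thesis using cW XS card_mono[OF _ XS] by simp
qed

lemma pad:
  assumes fr: "gen_full_rank n k g"
  shows "good n k g X B \<Longrightarrow> card B < k \<Longrightarrow> k - 1 - card B = q \<Longrightarrow> min_dist n k g + card X + q \<le> n"
proof (induction q arbitrary: X B)
  case 0
  then show ?case using dist_bound[OF fr] by simp
next
  case (Suc q)
  have XS: "X \<subseteq> {1..n}" and BX: "B \<subseteq> X" and sp: "\<forall>j\<in>X. in_col_span k g B j"
    using Suc.prems(1) unfolding good_def by auto
  have fX: "finite X" and fB: "finite B" using good_finite[OF Suc.prems(1)] by auto
  have "X \<noteq> {1..n}"
  proof
    assume "X = {1..n}"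
    then have "k \<le> card B" using full_cover[OF fr] Suc.prems(1) by simp
    then show False using Suc.prems(2) by simp
  qed
  then obtain x where x: "x \<in> {1..n}" "x \<notin> X" using XS by blast
  have fB': "finite (insert x B)" using fB by simp
  have "good n k g (insert x X) (insert x B)"
    unfolding good_def
  proof (intro conjI ballI)
    show "insert x X \<subseteq> {1..n}" using x XS by simp
    show "insert x B \<subseteq> insert x X" using BX by blast
    fix j assume j: "j \<in> insert x X"
    show "in_col_span k g (insert x B) j"
    proof (cases "j = x")
      case True then show ?thesis using span_base[of j "insert x B"] fB' by simp
    next
      case False then show ?thesis using j sp span_mono[of k g B j "insert x B"] fB' by blast
    qed
  qed
  moreover have "card (insert x B) = card B + 1"
  proof -
    have "x \<notin> B" using x BX by blast
    then show ?thesis using fB by simp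
  qed
  moreover have "card (insert x X) = card X + 1" using x fX by simp
  ultimately show ?case using Suc.IH[of "insert x X" "insert x B"] Suc.prems(2,3) by simp
qed

lemma divlem: "1 \<le> (dd::nat) \<Longrightarrow> (c * dd + dd - 1) div dd = c"
proof -
  assume "1 \<le> dd"
  then have eq: "c * dd + dd - 1 = c * dd + (dd - 1)" by simp
  have "(c * dd + (dd - 1)) div dd = c + (dd - 1) div dd"
    using div_mult_self3[of dd c "dd - 1"] \<open>1 \<le> dd\<close> by simp
  then show ?thesis unfolding eq using \<open>1 \<le> dd\<close> by simp
qed



theorem theorem2:
  fixes g :: "nat \<Rightarrow> nat \<Rightarrow> 'a::{field,finite}"
    and n k s :: nat and T :: "nat \<Rightarrow> nat set" and r \<delta> :: "nat \<Rightarrow> nat"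
  assumes "s \<ge> 2"
    and "gen_full_rank n k g"
    and "multiple_localities n k g s T r \<delta>"
    and "(\<Sum>i=1..s-1. int (r i) * \<lceil>real (card (T i)) / real (r i + \<delta> i - 1)\<rceil>) \<le> int k - 1"
    and "\<forall>j\<in>{1..s-1}.
           int (r j) * \<lceil>real_of_int (Delta T r \<delta> j - Delta T r \<delta> (j-1) - 1) / real (\<delta> j - 1)\<rceil>
             + (Delta T r \<delta> j - Delta T r \<delta> (j-1) - 1) < int (card (T j))"
  shows "int (min_dist n k g) \<le> int n - int k + 1
           - (\<Sum>i=1..s-1. \<lceil>real (card (T i)) / real (r i + \<delta> i - 1)\<rceil> * (int (\<delta> i) - 1))
           - (\<lceil>real_of_int (int k - (\<Sum>i=1..s-1. int (r i) * \<lceil>real (card (T i)) / real (r i + \<delta> i - 1)\<rceil>))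
                 / real (r s)\<rceil> - 1) * (int (\<delta> s) - 1)"
proof -
  have fr: "gen_full_rank n k g" using assms(2) .
  have part: "is_partition n s T"
    and mono: "\<forall>i j. 1 \<le> i \<longrightarrow> i \<le> j \<longrightarrow> j \<le> s \<longrightarrow> r i \<le> r j \<and> \<delta> j \<le> \<delta> i"
    and ds: "\<delta> s \<ge> 2"
    and loc: "\<forall>i\<in>{1..s}. \<forall>\<iota>\<in>T i. \<exists>S. S \<subseteq> T i \<and> \<iota> \<in> S \<and> \<delta> i \<le> card S \<and> card S \<le> r i + \<delta> i - 1 \<and>
        (\<forall>E. E \<subseteq> S \<longrightarrow> card E = \<delta> i - 1 \<longrightarrow> (\<forall>j\<in>E. regenerating n k g j ((S - E) \<union> {j})))"
    using assms(3) unfolding multiple_localities_def by auto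
  have locS: "\<exists>S. S \<subseteq> T i \<and> \<iota> \<in> S \<and> \<delta> i \<le> card S \<and> card S \<le> r i + \<delta> i - 1 \<and>
        (\<forall>E. E \<subseteq> S \<longrightarrow> card E = \<delta> i - 1 \<longrightarrow> (\<forall>j\<in>E. regenerating n k g j ((S - E) \<union> {j})))"
    if "i \<in> {1..s}" "\<iota> \<in> T i" for i \<iota>
    using bspec[OF bspec[OF loc that(1)] that(2)] .
  have Tsub: "T i \<subseteq> {1..n}" if "i \<in> {1..s}" for i using part that unfolding is_partition_def by blast
  have Tdisj: "T i \<inter> T j = {}" if "i \<in> {1..s}" "j \<in> {1..s}" "i \<noteq> j" for i j
    using part that unfolding is_partition_def by blast
  have Tcov: "\<exists>i\<in>{1..s}. x \<in> T i" if "x \<in> {1..n}" for x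
    using part that unfolding is_partition_def by blast
  have rdle: "r i \<le> r s \<and> \<delta> s \<le> \<delta> i" if "i \<in> {1..s}" for i
    using mono that by auto
  have rle: "r i \<le> r s" and dle: "\<delta> s \<le> \<delta> i" if "i \<in> {1..s}" for i using rdle[OF that] by auto
  have dge: "2 \<le> \<delta> i" if "i \<in> {1..s}" for i using dle[OF that] ds by linarith
  define cn where "cn i = nat \<lceil>real (card (T i)) / real (r i + \<delta> i - 1)\<rceil>" for i
  have cn_eq: "\<lceil>real (card (T i)) / real (r i + \<delta> i - 1)\<rceil> = int (cn i)" for i
  proof -
    have "0 \<le> real (card (T i)) / real (r i + \<delta> i - 1)" by simp
    then have "0 \<le> \<lceil>real (card (T i)) / real (r i + \<delta> i - 1)\<rceil>"
      by (metis ceiling_mono ceiling_zero)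
    then show ?thesis unfolding cn_def by simp
  qed
  have Dd: "Delta T r \<delta> (Suc j) - Delta T r \<delta> (Suc j - 1) = int (cn (Suc j)) * (int (\<delta> (Suc j)) - 1)" for j
    unfolding Delta_def cn_eq by simp
  have stage: "j \<le> s - 1 \<Longrightarrow> \<exists>X B. good n k g X B \<and> X \<subseteq> (\<Union>i\<in>{1..j}. T i)
      \<and> card B \<le> (\<Sum>i=1..j. r i * cn i) \<and> (\<Sum>i=1..j. cn i * (\<delta> i - 1)) + card B \<le> card X" for j
  proof (induction j)
    case 0
    have "good n k g {} {}" unfolding good_def by simp
    then show ?case by (intro exI[of _ "{}"]) auto
  next
    case (Suc j)
    obtain X0 B0 where X0: "good n k g X0 B0" "X0 \<subseteq> (\<Union>i\<in>{1..j}. T i)"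
      "card B0 \<le> (\<Sum>i=1..j. r i * cn i)" "(\<Sum>i=1..j. cn i * (\<delta> i - 1)) + card B0 \<le> card X0"
      using Suc by auto
    define jj where "jj = Suc j"
    have jj: "jj \<in> {1..s}" "jj \<in> {1..s-1}" using Suc.prems unfolding jj_def by auto
    define dd where "dd = \<delta> jj - 1"
    define D where "D = cn jj * dd"
    have dd1: "1 \<le> dd" using dge[OF jj(1)] unfolding dd_def by simp
    have X0T: "X0 \<inter> T jj = {}"
    proof -
      have "T i \<inter> T jj = {}" if "i \<in> {1..j}" for i using Tdisj[of i jj] that jj unfolding jj_def by auto
      then show ?thesis using X0(2) by blast
    qed
    have fX0: "finite X0" using good_finite[OF X0(1)] by simp
    have hyp: "int (r jj) * \<lceil>real (D - 1) / real dd\<rceil> + int (D - 1) < int (card (T jj))" if D1: "1 \<le> D"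
    proof -
      have e1: "Delta T r \<delta> jj - Delta T r \<delta> (jj - 1) = int D"
        unfolding jj_def Dd D_def dd_def using dge[OF jj(1)] unfolding jj_def by (simp add: of_nat_diff)
      have e2: "Delta T r \<delta> jj - Delta T r \<delta> (jj - 1) - 1 = int (D - 1)" using e1 D1 by simp
      have "real_of_int (int (D - 1)) = real (D - 1)" by simp
      then show ?thesis using assms(5) jj(2) e2 unfolding dd_def by metis
    qed
    have P0: "good n k g X0 B0 \<and> X0 \<subseteq> X0 \<and> X0 - X0 \<subseteq> T jj" using X0(1) by simp
    obtain X' B' where res: "good n k g X' B' \<and> X0 \<subseteq> X' \<and> X' - X0 \<subseteq> T jj"
      "card X0 + card B' + D \<le> card X' + card B0" "card B' \<le> card B0 + r jj * ((D + dd - 1) div dd)"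
    proof (atomize_elim, rule run[where P = "\<lambda>X B. good n k g X B \<and> X0 \<subseteq> X \<and> X - X0 \<subseteq> T jj", OF dd1 P0])
      fix X B
      assume P: "good n k g X B \<and> X0 \<subseteq> X \<and> X - X0 \<subseteq> T jj"
        and h0: "card X0 + card B \<le> card X + card B0"
        and hD: "card X + card B0 < card X0 + card B + D"
        and hinv: "card B \<le> card B0 + r jj * ((card X + card B0 - (card X0 + card B)) div dd)"
      define h where "h = card X + card B0 - (card X0 + card B)"
      have fX: "finite X" using good_finite P by blast
      have D1: "1 \<le> D" using hD h0 by linarith
      have "h div dd \<le> (D - 1) div dd" using hD h0 unfolding h_def by (intro div_le_mono) linarith
      then have "r jj * (h div dd) \<le> r jj * ((D - 1) div dd)" by (rule mult_le_mono2)
      moreover have "card (X - X0) = card X - card X0" using P fX0 by (simp add: card_Diff_subset)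
      ultimately have cXX: "card (X - X0) \<le> (D - 1) + r jj * ((D - 1) div dd)"
        using hinv hD h0 unfolding h_def by linarith
      have "int ((D - 1) div dd) \<le> \<lceil>real (D - 1) / real dd\<rceil>"
        using floor_divide_of_nat_eq[where 'a=real and m="D - 1" and n=dd] floor_le_ceiling[of "real (D - 1) / real dd"] by linarith
      then have "int (r jj) * int ((D - 1) div dd) \<le> int (r jj) * \<lceil>real (D - 1) / real dd\<rceil>"
        by (intro mult_left_mono) auto
      moreover have "int (card (X - X0)) \<le> int (D - 1) + int (r jj) * int ((D - 1) div dd)"
        using cXX by (metis of_nat_add of_nat_le_iff of_nat_mult)
      ultimately have "int (card (X - X0)) < int (card (T jj))" using hyp[OF D1] by linarith
      then have "card (X - X0) < card (T jj)" by simp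
      then obtain \<iota> where \<iota>: "\<iota> \<in> T jj" "\<iota> \<notin> X"
      proof -
        assume a: "\<And>\<iota>. \<iota> \<in> T jj \<Longrightarrow> \<iota> \<notin> X \<Longrightarrow> thesis"
        show thesis
        proof (rule ccontr)
          assume "\<not> thesis"
          then have "T jj \<subseteq> X - X0" using a X0T by blast
          then have "card (T jj) \<le> card (X - X0)" using fX by (intro card_mono) auto
          then show False using \<open>card (X - X0) < card (T jj)\<close> by linarith
        qed
      qed
      obtain S where S: "S \<subseteq> T jj" "\<iota> \<in> S" "\<delta> jj \<le> card S" "card S \<le> r jj + \<delta> jj - 1"
        "\<forall>E. E \<subseteq> S \<longrightarrow> card E = \<delta> jj - 1 \<longrightarrow> (\<forall>j\<in>E. regenerating n k g j ((S - E) \<union> {j}))"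
        using locS[OF jj(1) \<iota>(1)] by (elim exE conjE)
      have Sn: "S \<subseteq> {1..n}" using S(1) Tsub[OF jj(1)] by blast
      obtain B' where B': "good n k g (X \<union> S) B'" "card B \<le> card B'" "card B' \<le> card B + r jj"
        "card X + card B' + 1 \<le> card (X \<union> S) + card B"
        "card B < card B' \<longrightarrow> card X + card B' + (\<delta> jj - 1) \<le> card (X \<union> S) + card B"
        using step[OF conjunct1[OF P] Sn S(2) \<iota>(2) S(3) S(4) dge[OF jj(1)] S(5)] by blast
      show "\<exists>X' B'. (good n k g X' B' \<and> X0 \<subseteq> X' \<and> X' - X0 \<subseteq> T jj) \<and> card B \<le> card B' \<and> card B' \<le> card B + r jj
          \<and> card X + card B' + 1 \<le> card X' + card B
          \<and> (card B < card B' \<longrightarrow> card X + card B' + dd \<le> card X' + card B)"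
      proof (rule exI[of _ "X \<union> S"], rule exI[of _ B'])
        have Pn: "good n k g (X \<union> S) B' \<and> X0 \<subseteq> X \<union> S \<and> (X \<union> S) - X0 \<subseteq> T jj"
          using B'(1) P S(1) by auto
        have c5: "card B < card B' \<longrightarrow> card X + card B' + dd \<le> card (X \<union> S) + card B"
          using B'(5) unfolding dd_def .
        show "(good n k g (X \<union> S) B' \<and> X0 \<subseteq> X \<union> S \<and> X \<union> S - X0 \<subseteq> T jj) \<and> card B \<le> card B' \<and> card B' \<le> card B + r jj
          \<and> card X + card B' + 1 \<le> card (X \<union> S) + card B
          \<and> (card B < card B' \<longrightarrow> card X + card B' + dd \<le> card (X \<union> S) + card B)"
          using Pn B'(2) B'(3) B'(4) c5 by (simp only: simp_thms)
      qed
    qed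
    have "(D + dd - 1) div dd = cn jj" unfolding D_def using divlem[OF dd1] by simp
    then have cB': "card B' \<le> card B0 + r jj * cn jj" using res(3) by simp
    have "X' \<subseteq> (\<Union>i\<in>{1..Suc j}. T i)" using res(1) X0(2) unfolding jj_def by fastforce
    moreover have "card B' \<le> (\<Sum>i=1..Suc j. r i * cn i)" using cB' X0(3) unfolding jj_def by simp
    moreover have "(\<Sum>i=1..Suc j. cn i * (\<delta> i - 1)) + card B' \<le> card X'"
      using res(2) X0(4) unfolding jj_def D_def dd_def by simp
    ultimately show ?case using res(1) by blast
  qed
  have s1: "s - 1 \<le> s - 1" by simp
  obtain X0 B0 where X0: "good n k g X0 B0" "X0 \<subseteq> (\<Union>i\<in>{1..s-1}. T i)"
      "card B0 \<le> (\<Sum>i=1..s-1. r i * cn i)" "(\<Sum>i=1..s-1. cn i * (\<delta> i - 1)) + card B0 \<le> card X0"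
    using stage[OF s1] by blast
  define R where "R = (\<Sum>i=1..s-1. r i * cn i)"
  define \<Sigma> where "\<Sigma> = (\<Sum>i=1..s-1. cn i * (\<delta> i - 1))"
  have sumR: "(\<Sum>i=1..s-1. int (r i) * \<lceil>real (card (T i)) / real (r i + \<delta> i - 1)\<rceil>) = int R"
    unfolding R_def cn_eq by simp
  have sumS: "(\<Sum>i=1..s-1. \<lceil>real (card (T i)) / real (r i + \<delta> i - 1)\<rceil> * (int (\<delta> i) - 1)) = int \<Sigma>"
    unfolding \<Sigma>_def cn_eq of_nat_sum
  proof (rule sum.cong[OF refl])
    fix i assume "i \<in> {1..s-1}"
    then have "i \<in> {1..s}" by auto
    then have "1 \<le> \<delta> i" using dge by fastforce
    then show "int (cn i) * (int (\<delta> i) - 1) = int (cn i * (\<delta> i - 1))" by (simp add: of_nat_diff)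
  qed
  have Rk: "R + 1 \<le> k" using assms(4) unfolding sumR by linarith
  define c where "c = \<lceil>real_of_int (int k - int R) / real (r s)\<rceil>"
  define M where "M = nat (c - 1)"
  define dds where "dds = \<delta> s - 1"
  define D where "D = M * dds"
  have dds1: "1 \<le> dds" using ds unfolding dds_def by simp
  have MR: "r s * M + R + 1 \<le> k"
  proof (cases "M = 0")
    case True then show ?thesis using Rk by simp
  next
    case False
    then have c2: "2 \<le> c" unfolding M_def by linarith
    have rs: "r s > 0"
    proof (rule ccontr)
      assume "\<not> r s > 0"
      then have "c = 0" unfolding c_def by simp
      then show False using c2 by simp
    qed
    have "\<not> real_of_int (int k - int R) / real (r s) \<le> real_of_int (c - 1)"
    proof
      assume "real_of_int (int k - int R) / real (r s) \<le> real_of_int (c - 1)"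
      then have "c \<le> c - 1" unfolding c_def using ceiling_le_iff by blast
      then show False by simp
    qed
    then have "real_of_int (c - 1) < real_of_int (int k - int R) / real (r s)" by simp
    then have "real_of_int (c - 1) * real (r s) < real_of_int (int k - int R)"
      using rs by (simp add: pos_less_divide_eq)
    moreover have "real_of_int (c - 1) = real M" unfolding M_def using c2 by simp
    ultimately have "real (M * r s) < real k - real R" by simp
    then have "M * r s + R < k" by linarith
    then show ?thesis by (simp add: mult.commute)
  qed
  have P0: "good n k g X0 B0 \<and> X0 \<subseteq> X0" using X0(1) by simp
  obtain X' B' where res: "good n k g X' B' \<and> X0 \<subseteq> X'"
      "card X0 + card B' + D \<le> card X' + card B0" "card B' \<le> card B0 + r s * ((D + dds - 1) div dds)"
  proof (atomize_elim, rule run[where P = "\<lambda>X B. good n k g X B \<and> X0 \<subseteq> X", OF dds1 P0])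
    fix X B
    assume P: "good n k g X B \<and> X0 \<subseteq> X"
      and h0: "card X0 + card B \<le> card X + card B0"
      and hD: "card X + card B0 < card X0 + card B + D"
      and hinv: "card B \<le> card B0 + r s * ((card X + card B0 - (card X0 + card B)) div dds)"
    define h where "h = card X + card B0 - (card X0 + card B)"
    have D1: "1 \<le> D" using hD h0 by linarith
    then have M1: "1 \<le> M" unfolding D_def by (cases M) auto
    have "D - 1 = (M - 1) * dds + dds - 1" unfolding D_def using M1 dds1
      by (metis Suc_diff_1 add.commute less_le_trans less_numeral_extra(1) mult_Suc)
    then have "(D - 1) div dds = M - 1" using divlem[OF dds1, of "M - 1"] by simp
    moreover have "h div dds \<le> (D - 1) div dds" using hD h0 unfolding h_def by (intro div_le_mono) linarith
    ultimately have "h div dds \<le> M - 1" by simp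
    then have "r s * (h div dds) \<le> r s * (M - 1)" by (rule mult_le_mono2)
    moreover have "r s * (M - 1) \<le> r s * M" by simp
    ultimately have cBk: "card B < k" using hinv X0(3) MR unfolding h_def R_def by linarith
    have XS: "X \<subseteq> {1..n}" using P unfolding good_def by blast
    have "X \<noteq> {1..n}"
    proof
      assume "X = {1..n}"
      then have "k \<le> card B" using full_cover[OF fr] P by simp
      then show False using cBk by simp
    qed
    then obtain \<iota> where \<iota>: "\<iota> \<in> {1..n}" "\<iota> \<notin> X" using XS by blast
    obtain i where i: "i \<in> {1..s}" "\<iota> \<in> T i" using Tcov[OF \<iota>(1)] by blast
    obtain S where S: "S \<subseteq> T i" "\<iota> \<in> S" "\<delta> i \<le> card S" "card S \<le> r i + \<delta> i - 1"
        "\<forall>E. E \<subseteq> S \<longrightarrow> card E = \<delta> i - 1 \<longrightarrow> (\<forall>j\<in>E. regenerating n k g j ((S - E) \<union> {j}))"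
      using locS[OF i] by (elim exE conjE)
    have Sn: "S \<subseteq> {1..n}" using S(1) Tsub[OF i(1)] by blast
    obtain B' where B': "good n k g (X \<union> S) B'" "card B \<le> card B'" "card B' \<le> card B + r i"
        "card X + card B' + 1 \<le> card (X \<union> S) + card B"
        "card B < card B' \<longrightarrow> card X + card B' + (\<delta> i - 1) \<le> card (X \<union> S) + card B"
      using step[OF conjunct1[OF P] Sn S(2) \<iota>(2) S(3) S(4) dge[OF i(1)] S(5)] by (elim exE conjE)
    show "\<exists>X' B'. (good n k g X' B' \<and> X0 \<subseteq> X') \<and> card B \<le> card B' \<and> card B' \<le> card B + r s
          \<and> card X + card B' + 1 \<le> card X' + card B
          \<and> (card B < card B' \<longrightarrow> card X + card B' + dds \<le> card X' + card B)"
    proof (rule exI[of _ "X \<union> S"], rule exI[of _ B'])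
      have Pn: "good n k g (X \<union> S) B' \<and> X0 \<subseteq> X \<union> S" using B'(1) P by auto
      have c3: "card B' \<le> card B + r s" using B'(3) rle[OF i(1)] by linarith
      have c5: "card B < card B' \<longrightarrow> card X + card B' + dds \<le> card (X \<union> S) + card B"
        using B'(5) dle[OF i(1)] unfolding dds_def by linarith
      show "(good n k g (X \<union> S) B' \<and> X0 \<subseteq> X \<union> S) \<and> card B \<le> card B' \<and> card B' \<le> card B + r s
          \<and> card X + card B' + 1 \<le> card (X \<union> S) + card B
          \<and> (card B < card B' \<longrightarrow> card X + card B' + dds \<le> card (X \<union> S) + card B)"
        using Pn B'(2) c3 B'(4) c5 by (simp only: simp_thms)
    qed
  qed
  have "(D + dds - 1) div dds = M" unfolding D_def using divlem[OF dds1] by simp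
  then have cB': "card B' \<le> R + r s * M" using res(3) X0(3) unfolding R_def by simp
  then have cBk: "card B' < k" using MR by (simp add: mult.commute)
  have pd: "min_dist n k g + card X' + (k - 1 - card B') \<le> n"
    using pad[OF fr conjunct1[OF res(1)] cBk refl] .
  have gap: "\<Sigma> + D + card B' \<le> card X'" using res(2) X0(4) unfolding \<Sigma>_def by linarith
  have md: "int (min_dist n k g) + int \<Sigma> + int D + int k - 1 \<le> int n"
    using pd gap cBk by linarith
  have cD: "(c - 1) * (int (\<delta> s) - 1) \<le> int D"
  proof (cases "0 \<le> c - 1")
    case True
    then have "c - 1 = int M" unfolding M_def by simp
    moreover have "int (\<delta> s) - 1 = int dds" unfolding dds_def using ds by simp
    ultimately show ?thesis unfolding D_def by simp
  next
    case False
    then have "(c - 1) * (int (\<delta> s) - 1) \<le> 0" using ds by (simp add: mult_nonpos_nonneg)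
    then show ?thesis by simp
  qed
  show ?thesis unfolding sumR sumS c_def[symmetric] using md cD by linarith
qed


end
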